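(* Let $H:\mathbb{R}^n\to\mathbb{R}$ be $\mu_H$-strongly convex with $\mu_H>0$, let $f^i_{j_i}:\mathbb{R}^n\to\mathbb{R}$ ($i\in[S]$, $j_i\in[I_i]$) be convex, and let $X\subset\mathbb{R}^n$ be nonempty, compact and convex. Let $m:=\sum_{i=1}^S I_i$, $F:=\sum_{i=1}^S\sum_{j_i=1}^{I_i} f^i_{j_i}$, and let $x^*_H$ be the unique solution of the bilevel problem: minimize $H(x)$ subject to $x\in\operatorname{argmin}_{y\in X}F(y)$. Let $\{\gamma_k\}_{k=1}^\infty$, $\{\lambda_k\}_{k=1}^\infty$ satisfy: (i) both are nonincreasing sequences of positive reals with $\gamma_1\lambda_1\mu_H\le 2m$; (ii) $\sum_{k=1}^\infty\gamma_k\lambda_k=\infty$, $\sum_{k=1}^\infty\frac{1}{\gamma_{k+1}\lambda_{k+1}}\big(1-\frac{\lambda_k}{\lambda_{k+1}}\big)^2<\infty$, and $\sum_{k=1}^\infty\gamma_k^2<\infty$; (iii) $\frac{1}{\gamma_{k+1}^2\lambda_{k+1}^2}\big(1-\frac{\lambda_k}{\lambda_{k+1}}\big)^2\to0$, $\frac{\gamma_k}{\lambda_k}\to0$, and $\lambda_k\to0$. Let $\{x_k\}_{k=1}^\infty$ be a sequence generated by FISM (described in the context) with these stepsizes. Then $\{x_k\}_{k=1}^\infty$ converges to $x^*_H$.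
   Context: Notation: $[s]:=\{1,\dots,s\}$; $P_X$ is the Euclidean metric projection onto $X$; $\partial$ denotes the convex subdifferential. FISM (Federated Incremental Subgradient Method): given a starting point $x_1\in\mathbb{R}^n$ and positive stepsizes $\{\gamma_k\},\{\lambda_k\}$, for $k=1,2,\dots$: pick $\mathcal{H}_k\in\partial H(x_k)$; for every client $i\in[S]$ set $x^i_{k,1}=x_k$ and for $j_i=1,\dots,I_i$ pick $g^i_{k,j_i}\in\partial f^i_{j_i}(x^i_{k,j_i})$ and set $x^i_{k,j_i+1}=P_X\big[x^i_{k,j_i}-\gamma_k g^i_{k,j_i}-\frac{\gamma_k\lambda_k}{m}\mathcal{H}_k\big]$; then set $x^i_k=x^i_{k,I_i+1}$ and $x_{k+1}=\frac1S\sum_{i=1}^S x^i_k$. *)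

theory Defs
  imports "HOL-Analysis.Analysis"
begin

definition strongly_convex :: "real \<Rightarrow> ('a::real_inner \<Rightarrow> real) \<Rightarrow> bool" where
  "strongly_convex \<mu> h \<longleftrightarrow>
     (\<forall>x y t. 0 \<le> t \<longrightarrow> t \<le> 1 \<longrightarrow>
        h (t *\<^sub>R x + (1 - t) *\<^sub>R y)
          \<le> t * h x + (1 - t) * h y - \<mu> / 2 * t * (1 - t) * (norm (x - y))\<^sup>2)"

definition subdiff :: "('a::real_inner \<Rightarrow> real) \<Rightarrow> 'a \<Rightarrow> 'a set" where
  "subdiff h x = {g. \<forall>y. h y \<ge> h x + g \<bullet> (y - x)}"

text \<open>FISM iterates: x (outer), y k i j (inner iterates x^i_{k,j}), g k i j (subgradients),
  Hs k (subgradients of H), all indices starting at 1.\<close>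
definition is_FISM ::
  "nat \<Rightarrow> (nat \<Rightarrow> nat) \<Rightarrow> (nat \<Rightarrow> nat \<Rightarrow> 'a::{real_inner,heine_borel} \<Rightarrow> real) \<Rightarrow> ('a \<Rightarrow> real)
   \<Rightarrow> 'a set \<Rightarrow> (nat \<Rightarrow> real) \<Rightarrow> (nat \<Rightarrow> real)
   \<Rightarrow> (nat \<Rightarrow> 'a) \<Rightarrow> (nat \<Rightarrow> 'a) \<Rightarrow> (nat \<Rightarrow> nat \<Rightarrow> nat \<Rightarrow> 'a) \<Rightarrow> (nat \<Rightarrow> nat \<Rightarrow> nat \<Rightarrow> 'a) \<Rightarrow> bool" where
  "is_FISM S I f H X \<gamma> lam x Hs y g \<longleftrightarrow>
     (let m = real (\<Sum>i=1..S. I i) in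
     (\<forall>k\<ge>1.
        Hs k \<in> subdiff H (x k) \<and>
        (\<forall>i\<in>{1..S}.
           y k i 1 = x k \<and>
           (\<forall>j\<in>{1..I i}.
              g k i j \<in> subdiff (f i j) (y k i j) \<and>
              y k i (j + 1) = closest_point X
                 (y k i j - \<gamma> k *\<^sub>R g k i j - (\<gamma> k * lam k / m) *\<^sub>R Hs k))) \<and>
        x (k + 1) = (1 / real S) *\<^sub>R (\<Sum>i=1..S. y k i (I i + 1))))"

end

theory Submission
  imports Defs
begin



lemma cvx_bound:
  fixes f :: "'a::euclidean_space \<Rightarrow> real"
  assumes cv: "convex_on UNIV f" and X: "compact X"
  shows "\<exists>M\<ge>0. \<forall>u. (\<exists>x\<in>X. norm (u - x) \<le> 1) \<longrightarrow> \<bar>f u\<bar> \<le> M"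
proof -
  have c: "continuous_on UNIV f" by (rule convex_on_continuous[OF _ cv]) simp
  let ?T = "{x + y | x y. x \<in> X \<and> y \<in> cball 0 1}"
  have "compact ?T" by (rule compact_sums[OF X]) simp
  then have "compact (f ` ?T)" by (rule compact_continuous_image[OF continuous_on_subset[OF c subset_UNIV]])
  then obtain M where M: "\<forall>v\<in>f ` ?T. norm v \<le> M" using compact_imp_bounded[of "f ` ?T"] unfolding bounded_iff by blast
  show ?thesis
  proof (intro exI[of _ "max M 0"] conjI allI impI)
    fix u assume "\<exists>x\<in>X. norm (u - x) \<le> 1"
    then obtain x where x: "x \<in> X" "norm (u - x) \<le> 1" by blast
    have "u \<in> ?T" using x by (intro CollectI exI[of _ x] exI[of _ "u - x"]) auto
    then show "\<bar>f u\<bar> \<le> max M 0" using M by fastforce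
  qed simp
qed

lemma cvx_lip:
  fixes f :: "'a::euclidean_space \<Rightarrow> real"
  assumes cv: "convex_on UNIV f" and M: "\<forall>u. (\<exists>x\<in>X. norm (u - x) \<le> 1) \<longrightarrow> \<bar>f u\<bar> \<le> M"
    and u: "u \<in> X" and v: "v \<in> X"
  shows "f v - f u \<le> 2 * M * norm (v - u)"
proof -
  define d where "d = norm (v - u)"
  have fu: "\<bar>f u\<bar> \<le> M" using M u by force
  have fv: "\<bar>f v\<bar> \<le> M" using M v by force
  show ?thesis
  proof (cases "d \<ge> 1")
    case True
    then have "2 * M \<le> 2 * M * d" using fu by (simp add: mult_le_cancel_left1)
    then show ?thesis using fu fv unfolding d_def by linarith
  next
    case False
    show ?thesis
    proof (cases "d = 0")
      case True then show ?thesis unfolding d_def by simp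
    next
      case d0: False
      then have dp: "d > 0" unfolding d_def by simp
      define w where "w = v + (1/d) *\<^sub>R (v - u)"
      have "norm (w - v) = 1" unfolding w_def d_def using dp d_def by simp
      then have "norm (w - v) \<le> 1" by simp
      then have "\<exists>x\<in>X. norm (w - x) \<le> 1" using v by blast
      then have fw: "\<bar>f w\<bar> \<le> M" using M[rule_format] by blast
      define t where "t = d / (1 + d)"
      have t0: "0 \<le> t" "t \<le> 1" unfolding t_def using dp by auto
      have e1: "1 - t = 1 / (1 + d)" unfolding t_def using dp by (simp add: field_simps)
      have e2: "t * (1 / d) = 1 / (1 + d)" unfolding t_def using dp by (simp add: field_simps)
      have e3: "t + 1 / (1 + d) = 1" unfolding t_def using dp by (simp add: field_simps)
      have "(1 - t) *\<^sub>R u + t *\<^sub>R w = (1 - t) *\<^sub>R u + t *\<^sub>R v + (t * (1/d)) *\<^sub>R (v - u)"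
        unfolding w_def by (simp add: scaleR_add_right)
      also have "\<dots> = (1 / (1 + d)) *\<^sub>R u + t *\<^sub>R v + (1 / (1 + d)) *\<^sub>R (v - u)"
        unfolding e1 e2 ..
      also have "\<dots> = (t + 1 / (1 + d)) *\<^sub>R v"
        by (simp add: scaleR_diff_right scaleR_add_left)
      also have "\<dots> = v" unfolding e3 by simp
      finally have "(1 - t) *\<^sub>R u + t *\<^sub>R w = v" .
      then have "f v \<le> (1 - t) * f u + t * f w" using convex_onD[OF cv t0] by force
      then have "f v - f u \<le> t * (f w - f u)" by (simp add: algebra_simps)
      also have "\<dots> \<le> t * (2 * M)" using fw fu t0 by (intro mult_left_mono) auto
      also have "\<dots> \<le> d * (2 * M)" unfolding t_def using dp fu
        by (intro mult_right_mono) (auto simp: divide_simps)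
      finally show ?thesis unfolding d_def by (simp add: mult.commute)
    qed
  qed
qed

lemma cvx_subgrad_bound:
  fixes f :: "'a::euclidean_space \<Rightarrow> real"
  assumes M: "\<forall>u. (\<exists>x\<in>X. norm (u - x) \<le> 1) \<longrightarrow> \<bar>f u\<bar> \<le> M"
    and u: "u \<in> X" and g: "g \<in> subdiff f u"
  shows "norm g \<le> 2 * M"
proof (cases "g = 0")
  case True
  have "\<bar>f u\<bar> \<le> M" using M u by force
  then show ?thesis using True by simp
next
  case False
  define w where "w = u + (1 / norm g) *\<^sub>R g"
  have "norm (w - u) = 1" unfolding w_def using False by simp
  then have "norm (w - u) \<le> 1" by simp
  then have "\<exists>x\<in>X. norm (w - x) \<le> 1" using u by blast
  then have fw: "\<bar>f w\<bar> \<le> M" using M[rule_format] by blast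
  have fu: "\<bar>f u\<bar> \<le> M" using M u by force
  have "f w \<ge> f u + g \<bullet> (w - u)" using g unfolding subdiff_def by blast
  moreover have "g \<bullet> (w - u) = norm g" unfolding w_def using False
    by (simp add: inner_commute power2_norm_eq_inner[symmetric] power2_eq_square)
  ultimately show ?thesis using fw fu by linarith
qed



lemma seq_conv:
  fixes a b :: "nat \<Rightarrow> real"
  assumes a0: "\<forall>k. a k \<ge> 0"
    and bpos: "\<forall>k\<ge>1. b k \<ge> 0"
    and div: "\<not> summable (\<lambda>k. b (k + 1))"
    and P: "\<forall>\<epsilon>>0. \<exists>\<delta>>0. \<exists>K. \<forall>k\<ge>K. \<epsilon> \<le> a k \<longrightarrow> a (k + 1) \<le> a k - \<delta> * b k"
    and Q: "\<forall>\<epsilon>>0. \<exists>K. \<forall>k\<ge>K. a (k + 1) \<le> a k + \<epsilon>"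
  shows "a \<longlonglongrightarrow> 0"
proof (rule LIMSEQ_I)
  fix r :: real assume r: "0 < r"
  obtain \<delta> K1 where d: "\<delta> > 0" and K1: "\<forall>k\<ge>K1. r/2 \<le> a k \<longrightarrow> a (k + 1) \<le> a k - \<delta> * b k"
    using P r by (meson half_gt_zero)
  obtain K2 where K2: "\<forall>k\<ge>K2. a (k + 1) \<le> a k + r/2" using Q r by (meson half_gt_zero)
  define K where "K = max K1 K2 + 1"
  have "\<exists>k1\<ge>K. a k1 < r/2"
  proof (rule ccontr)
    assume "\<not> ?thesis"
    then have big: "\<forall>k\<ge>K. r/2 \<le> a k" by (auto simp: not_less)
    have ind: "a (K + n) \<le> a K - \<delta> * (\<Sum>i<n. b (i + K))" for n
    proof (induction n)
      case 0 then show ?case by simp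
    next
      case (Suc n)
      have "K + n \<ge> K1" unfolding K_def by simp
      then have "a (K + n + 1) \<le> a (K + n) - \<delta> * b (K + n)" using K1 big by simp
      then show ?case using Suc by (simp add: algebra_simps)
    qed
    have "summable (\<lambda>i. b (i + K))"
    proof (rule summableI_nonneg_bounded)
      fix n show "0 \<le> b (n + K)" using bpos unfolding K_def by simp
      have "\<delta> * (\<Sum>i<n. b (i + K)) \<le> a K" using ind[of n] a0[rule_format, of "K+n"] by simp
      then show "(\<Sum>i<n. b (i + K)) \<le> a K / \<delta>" using d by (simp add: field_simps)
    qed
    then have "summable b" by (simp add: summable_iff_shift)
    then have "summable (\<lambda>k. b (k + 1))" using summable_iff_shift[of b 1] by simp
    then show False using div by simp
  qed
  then obtain k1 where k1: "k1 \<ge> K" "a k1 < r/2" by blast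
  have "a (k1 + n) < r" for n
  proof (induction n)
    case 0 then show ?case using k1 r by simp
  next
    case (Suc n)
    show ?case
    proof (cases "a (k1 + n) < r/2")
      case True
      have "k1 + n \<ge> K2" using k1 unfolding K_def by simp
      then have "a (k1 + n + 1) \<le> a (k1 + n) + r/2" using K2 by simp
      then show ?thesis using True by simp
    next
      case False
      have "k1 + n \<ge> K1" "k1 + n \<ge> 1" using k1 unfolding K_def by auto
      then have "a (k1 + n + 1) \<le> a (k1 + n) - \<delta> * b (k1 + n)" using K1 False by simp
      moreover have "\<delta> * b (k1 + n) \<ge> 0" using bpos d \<open>k1 + n \<ge> 1\<close> by simp
      ultimately show ?thesis using Suc by simp
    qed
  qed
  then have "\<forall>n\<ge>k1. norm (a n - 0) < r"
    using a0 by (metis abs_of_nonneg diff_zero le_Suc_ex real_norm_def)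
  then show "\<exists>no. \<forall>n\<ge>no. norm (a n - 0) < r" by blast
qed



lemma key_lemma:
  fixes F D :: "'a::euclidean_space \<Rightarrow> real"
  assumes X: "compact X" and cF: "continuous_on UNIV F" and cD: "continuous_on UNIV D"
    and xH: "xH \<in> X" and Fmin: "\<forall>w\<in>X. F xH \<le> F w"
    and Dp: "\<forall>z\<in>X. F z \<le> F xH \<longrightarrow> \<mu> / 4 * (norm (z - xH))\<^sup>2 \<le> D z"
    and mu: "\<mu> > 0" and eps: "\<epsilon> > 0"
  shows "\<exists>\<delta>>0. \<exists>l0>0. \<forall>x\<in>X. \<epsilon> \<le> (norm (x - xH))\<^sup>2 \<longrightarrow>
           (\<forall>l. 0 < l \<longrightarrow> l \<le> l0 \<longrightarrow> \<delta> * l \<le> F x - F xH + l * D x)"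
proof -
  define \<delta> where "\<delta> = \<mu> * \<epsilon> / 8"
  have dp: "\<delta> > 0" unfolding \<delta>_def using mu eps by simp
  have "compact (D ` X)" by (rule compact_continuous_image[OF continuous_on_subset[OF cD subset_UNIV] X])
  then obtain MD where MD: "\<forall>v\<in>D ` X. norm v \<le> MD" using compact_imp_bounded[of "D ` X"] unfolding bounded_iff by blast
  have MD': "\<forall>x\<in>X. - MD \<le> D x" using MD by force
  define Ks where "Ks = X \<inter> {x. \<epsilon> \<le> (norm (x - xH))\<^sup>2} \<inter> {x. D x \<le> \<delta>}"
  have easy: "\<delta> * l \<le> F x - F xH + l * D x" if "x \<in> X" "\<delta> < D x" "0 < l" for x and l :: real
  proof -
    have "\<delta> * l \<le> l * D x" using that by (simp add: mult.commute)
    moreover have "F xH \<le> F x" using Fmin that(1) by blast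
    ultimately show ?thesis by linarith
  qed
  show ?thesis
  proof (cases "Ks = {}")
    case True
    show ?thesis
    proof (intro exI[of _ \<delta>] exI[of _ 1] conjI dp ballI impI allI)
      fix x and l :: real assume "x \<in> X" "\<epsilon> \<le> (norm (x - xH))\<^sup>2" "0 < l"
      then have "\<delta> < D x" using True unfolding Ks_def by auto
      then show "\<delta> * l \<le> F x - F xH + l * D x" using easy \<open>x \<in> X\<close> \<open>0 < l\<close> by blast
    qed
  next
    case False
    have c1: "closed {x. \<epsilon> \<le> (norm (x - xH))\<^sup>2}"
      by (intro closed_Collect_le continuous_intros)
    have c2: "closed {x. D x \<le> \<delta>}"
      by (intro closed_Collect_le cD continuous_on_const)
    have "compact Ks" unfolding Ks_def
      by (intro compact_Int_closed X c1 c2)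
    then obtain x' where x': "x' \<in> Ks" and xm: "\<forall>y\<in>Ks. F x' \<le> F y"
      using continuous_attains_inf[OF _ False continuous_on_subset[OF cF subset_UNIV]] by blast
    define \<eta> where "\<eta> = F x' - F xH"
    have "\<eta> > 0"
    proof (rule ccontr)
      assume "\<not> \<eta> > 0"
      then have "F x' \<le> F xH" unfolding \<eta>_def by simp
      then have "\<mu> / 4 * (norm (x' - xH))\<^sup>2 \<le> D x'" using Dp x' unfolding Ks_def by blast
      moreover have "\<mu> / 4 * \<epsilon> \<le> \<mu> / 4 * (norm (x' - xH))\<^sup>2" using x' mu unfolding Ks_def by simp
      moreover have "D x' \<le> \<delta>" using x' unfolding Ks_def by simp
      ultimately have "\<mu> / 4 * \<epsilon> \<le> \<mu> * \<epsilon> / 8" unfolding \<delta>_def by linarith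
      then show False using mu eps by (simp add: field_simps)
    qed
    have MD0: "MD \<ge> 0" using MD False unfolding Ks_def by force
    define l0 where "l0 = \<eta> / (MD + \<delta>)"
    have l0p: "l0 > 0" unfolding l0_def using \<open>\<eta> > 0\<close> MD0 dp by simp
    have main: "\<delta> * l \<le> F x - F xH + l * D x"
      if x: "x \<in> X" "\<epsilon> \<le> (norm (x - xH))\<^sup>2" and l: "0 < l" "l \<le> l0" for x and l :: real
      proof (cases "\<delta> < D x")
        case True then show ?thesis using easy x l by blast
      next
        case False
        then have "x \<in> Ks" using x unfolding Ks_def by auto
        then have "F x - F xH \<ge> \<eta>" using xm unfolding \<eta>_def by force
        have "l * (MD + \<delta>) \<le> \<eta>" using l MD0 dp unfolding l0_def by (simp add: field_simps)
        moreover have "l * D x \<ge> l * (- MD)" using MD' x l by (intro mult_left_mono) auto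
        ultimately show ?thesis using \<open>F x - F xH \<ge> \<eta>\<close> by (simp add: algebra_simps)
      qed
    show ?thesis using main dp l0p by blast
  qed
qed



lemma sc_subgrad:
  fixes H :: "'a::real_inner \<Rightarrow> real"
  assumes sc: "strongly_convex \<mu> H" and h: "h \<in> subdiff H x"
  shows "H x - H z + \<mu> / 4 * (norm (x - z))\<^sup>2 \<le> h \<bullet> (x - z)"
proof -
  have A: "\<And>t x y. 0 \<le> t \<Longrightarrow> t \<le> 1 \<Longrightarrow> H (t *\<^sub>R x + (1 - t) *\<^sub>R y)
          \<le> t * H x + (1 - t) * H y - \<mu> / 2 * t * (1 - t) * (norm (x - y))\<^sup>2"
    using sc unfolding strongly_convex_def by blast
  define p where "p = (1/2) *\<^sub>R x + (1 - 1/2) *\<^sub>R z"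
  have "H p \<le> 1/2 * H x + (1 - 1/2) * H z - \<mu> / 2 * (1/2) * (1 - 1/2) * (norm (x - z))\<^sup>2"
    using A[of "1/2" x z] unfolding p_def by simp
  moreover have "H p \<ge> H x + h \<bullet> (p - x)" using h unfolding subdiff_def by blast
  moreover have "p - x = (- 1/2) *\<^sub>R (x - z)" unfolding p_def by (simp add: algebra_simps flip: scaleR_add_left)
  ultimately have "H x + (- 1/2) * (h \<bullet> (x - z)) \<le> 1/2 * H x + 1/2 * H z - \<mu> / 8 * (norm (x - z))\<^sup>2"
    by simp
  then show ?thesis by (simp add: algebra_simps)
qed

lemma sc_convex:
  fixes H :: "'a::real_inner \<Rightarrow> real"
  assumes sc: "strongly_convex \<mu> H" and mu: "\<mu> \<ge> 0"
  shows "convex_on UNIV H"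
proof (rule convex_onI)
  have A: "\<And>t x y. 0 \<le> t \<Longrightarrow> t \<le> 1 \<Longrightarrow> H (t *\<^sub>R x + (1 - t) *\<^sub>R y)
          \<le> t * H x + (1 - t) * H y - \<mu> / 2 * t * (1 - t) * (norm (x - y))\<^sup>2"
    using sc unfolding strongly_convex_def by blast
  fix t x y assume t: "(0::real) < t" "t < 1"
  have "H ((1 - t) *\<^sub>R x + (1 - (1 - t)) *\<^sub>R y) \<le> (1 - t) * H x + (1 - (1 - t)) * H y
        - \<mu> / 2 * (1 - t) * (1 - (1 - t)) * (norm (x - y))\<^sup>2"
    using A[of "1 - t" x y] t by simp
  moreover have "\<mu> / 2 * (1 - t) * (1 - (1 - t)) * (norm (x - y))\<^sup>2 \<ge> 0" using mu t by simp
  ultimately show "H ((1 - t) *\<^sub>R x + t *\<^sub>R y) \<le> (1 - t) * H x + t * H y" by simp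
qed simp

lemma proj_nonexp:
  assumes "closed X" "convex X" "X \<noteq> {}" "z \<in> X"
  shows "norm (closest_point X v - z) \<le> norm (v - z)"
  using closest_point_lipschitz[OF assms(2,1,3), of v z] closest_point_self[OF assms(4)]
  by (simp add: dist_norm)



lemma client_bound:
  fixes Y g :: "nat \<Rightarrow> 'a::euclidean_space" and \<phi> :: "nat \<Rightarrow> 'a \<Rightarrow> real"
  assumes Xc: "closed X" "convex X" "X \<noteq> {}" and z: "z \<in> X" and xo: "xo \<in> X"
    and Y1: "Y 1 = xo" and n: "n \<ge> 1"
    and step: "\<forall>j\<in>{1..n}. Y (j + 1) = closest_point X (Y j - \<gamma> *\<^sub>R g j - c *\<^sub>R h)"
    and gsub: "\<forall>j\<in>{1..n}. g j \<in> subdiff (\<phi> j) (Y j)"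
    and gb: "\<forall>j\<in>{1..n}. \<forall>u\<in>X. \<forall>g'\<in>subdiff (\<phi> j) u. norm g' \<le> B"
    and lip: "\<forall>j\<in>{1..n}. \<forall>u\<in>X. \<forall>v\<in>X. \<phi> j v - \<phi> j u \<le> B * norm (v - u)"
    and hb: "norm h \<le> B" and hD: "D \<le> h \<bullet> (xo - z)"
    and gam: "0 \<le> \<gamma>" and c: "0 \<le> c" "c \<le> \<gamma>" and B: "0 \<le> B"
  shows "(norm (Y (n + 1) - z))\<^sup>2 \<le> (norm (xo - z))\<^sup>2 - 2 * \<gamma> * (\<Sum>j=1..n. \<phi> j xo - \<phi> j z)
           - 2 * c * real n * D + 12 * real n ^ 2 * B ^ 2 * \<gamma> ^ 2"
proof -
  define E where "E = 12 * real n * B ^ 2 * \<gamma> ^ 2"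
  have ind: "Y (j + 1) \<in> X \<and> norm (Y (j + 1) - xo) \<le> real j * (2 * B * \<gamma>) \<and>
      (norm (Y (j + 1) - z))\<^sup>2 \<le> (norm (xo - z))\<^sup>2 - (\<Sum>l=1..j. 2 * \<gamma> * (\<phi> l xo - \<phi> l z) + 2 * c * D)
        + real j * E" if "j \<le> n" for j
    using that
  proof (induction j)
    case 0 then show ?case using Y1 xo by simp
  next
    case (Suc j)
    define l where "l = Suc j"
    have l: "l \<in> {1..n}" using Suc.prems unfolding l_def by simp
    define Yc where "Yc = Y l"
    from Suc.IH Suc.prems have IH: "Yc \<in> X" "norm (Yc - xo) \<le> real j * (2 * B * \<gamma>)"
      "(norm (Yc - z))\<^sup>2 \<le> (norm (xo - z))\<^sup>2 - (\<Sum>l=1..j. 2 * \<gamma> * (\<phi> l xo - \<phi> l z) + 2 * c * D)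
        + real j * E" unfolding Yc_def l_def by auto
    define r where "r = norm (Yc - xo)"
    have r0: "0 \<le> r" unfolding r_def by simp
    have rb: "r \<le> real n * (2 * B * \<gamma>)"
    proof -
      have "real j \<le> real n" using Suc.prems by simp
      then have "real j * (2 * B * \<gamma>) \<le> real n * (2 * B * \<gamma>)" using B gam by (intro mult_right_mono) auto
      then show ?thesis using IH(2) unfolding r_def by linarith
    qed
    define gl where "gl = g l"
    have glsub: "gl \<in> subdiff (\<phi> l) Yc" using gsub l unfolding gl_def Yc_def by blast
    have glb: "norm gl \<le> B" using gb l IH(1) glsub by blast
    define w where "w = \<gamma> *\<^sub>R gl + c *\<^sub>R h"
    have Ynext: "Y (Suc l) = closest_point X (Yc - w)"
      using step l unfolding Yc_def w_def gl_def by (simp add: algebra_simps)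
    have wb: "norm w \<le> 2 * B * \<gamma>"
    proof -
      have "norm w \<le> norm (\<gamma> *\<^sub>R gl) + norm (c *\<^sub>R h)" unfolding w_def by (rule norm_triangle_ineq)
      also have "\<dots> = \<gamma> * norm gl + c * norm h" using gam c by simp
      also have "\<dots> \<le> \<gamma> * B + \<gamma> * B"
        using glb hb gam c B by (intro add_mono mult_mono) auto
      finally show ?thesis by simp
    qed
    have inX: "Y (Suc l) \<in> X" using Ynext closest_point_in_set[OF Xc(1,3)] by simp
    have d1: "norm (Y (Suc l) - Yc) \<le> norm w"
      using proj_nonexp[OF Xc IH(1), of "Yc - w"] Ynext by simp
    have dist1: "norm (Y (Suc l) - xo) \<le> real (Suc j) * (2 * B * \<gamma>)"
    proof -
      have "norm (Y (Suc l) - xo) \<le> norm (Y (Suc l) - Yc) + norm (Yc - xo)"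
        by (metis norm_triangle_ineq diff_add_cancel add_diff_eq)
      then show ?thesis using d1 wb IH(2) by (simp add: algebra_simps)
    qed
    have sq: "(norm (Y (Suc l) - z))\<^sup>2 \<le> (norm (Yc - z))\<^sup>2 - 2 * (w \<bullet> (Yc - z)) + (norm w)\<^sup>2"
    proof -
      have "norm (Y (Suc l) - z) \<le> norm ((Yc - z) - w)"
        using proj_nonexp[OF Xc z, of "Yc - w"] Ynext by (simp add: algebra_simps)
      then have "(norm (Y (Suc l) - z))\<^sup>2 \<le> (norm ((Yc - z) - w))\<^sup>2"
        by (simp add: power_mono)
      also have "\<dots> = (norm (Yc - z))\<^sup>2 - 2 * (w \<bullet> (Yc - z)) + (norm w)\<^sup>2"
        by (simp add: power2_norm_eq_inner inner_diff_left inner_diff_right inner_commute)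
      finally show ?thesis .
    qed
    have g1: "gl \<bullet> (Yc - z) \<ge> \<phi> l Yc - \<phi> l z"
    proof -
      have "\<phi> l z \<ge> \<phi> l Yc + gl \<bullet> (z - Yc)" using glsub unfolding subdiff_def by blast
      then show ?thesis by (simp add: inner_diff_right)
    qed
    have g2: "\<phi> l Yc \<ge> \<phi> l xo - B * r"
      using lip l IH(1) xo unfolding r_def by (metis norm_minus_commute diff_le_eq add.commute)
    have h1: "h \<bullet> (Yc - z) \<ge> D - B * r"
    proof -
      have "h \<bullet> (Yc - z) = h \<bullet> (xo - z) + h \<bullet> (Yc - xo)" by (simp add: inner_diff_right)
      moreover have "h \<bullet> (Yc - xo) \<ge> - (norm h * r)"
        using norm_cauchy_schwarz[of "-h" "Yc - xo"] unfolding r_def by simp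
      moreover have "norm h * r \<le> B * r" using hb r0 by (rule mult_right_mono)
      ultimately show ?thesis using hD by linarith
    qed
    have wz: "w \<bullet> (Yc - z) = \<gamma> * (gl \<bullet> (Yc - z)) + c * (h \<bullet> (Yc - z))"
      unfolding w_def by (simp add: inner_add_left)
    have e1: "\<gamma> * (gl \<bullet> (Yc - z)) \<ge> \<gamma> * (\<phi> l xo - \<phi> l z) - \<gamma> * (B * r)"
    proof -
      have "gl \<bullet> (Yc - z) \<ge> \<phi> l xo - \<phi> l z - B * r" using g1 g2 by linarith
      then have "\<gamma> * (gl \<bullet> (Yc - z)) \<ge> \<gamma> * (\<phi> l xo - \<phi> l z - B * r)" using gam by (rule mult_left_mono)
      then show ?thesis by (simp add: algebra_simps)
    qed
    have e2: "c * (h \<bullet> (Yc - z)) \<ge> c * D - c * (B * r)"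
    proof -
      have "c * (h \<bullet> (Yc - z)) \<ge> c * (D - B * r)" using h1 c by (intro mult_left_mono) auto
      then show ?thesis by (simp add: algebra_simps)
    qed
    have Br: "B * r \<le> real n * (2 * B ^ 2 * \<gamma>)"
    proof -
      have "B * r \<le> B * (real n * (2 * B * \<gamma>))" using rb B by (rule mult_left_mono)
      then show ?thesis by (simp add: power2_eq_square algebra_simps)
    qed
    have e3: "\<gamma> * (B * r) \<le> real n * (2 * B ^ 2 * \<gamma> ^ 2)"
    proof -
      have "\<gamma> * (B * r) \<le> \<gamma> * (real n * (2 * B ^ 2 * \<gamma>))" using Br gam by (rule mult_left_mono)
      then show ?thesis by (simp add: power2_eq_square algebra_simps)
    qed
    have e4: "c * (B * r) \<le> real n * (2 * B ^ 2 * \<gamma> ^ 2)"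
    proof -
      have "c * (B * r) \<le> \<gamma> * (B * r)" using c B r0 by (intro mult_right_mono) auto
      then show ?thesis using e3 by linarith
    qed
    have e5: "(norm w)\<^sup>2 \<le> real n * (4 * B ^ 2 * \<gamma> ^ 2)"
    proof -
      have "(norm w)\<^sup>2 \<le> (2 * B * \<gamma>)\<^sup>2" using wb by (simp add: power_mono)
      also have "\<dots> = 1 * (4 * B ^ 2 * \<gamma> ^ 2)" by (simp add: power2_eq_square)
      also have "\<dots> \<le> real n * (4 * B ^ 2 * \<gamma> ^ 2)" using n by (intro mult_right_mono) auto
      finally show ?thesis .
    qed
    have "(norm (Y (Suc l) - z))\<^sup>2 \<le> (norm (Yc - z))\<^sup>2 - (2 * \<gamma> * (\<phi> l xo - \<phi> l z) + 2 * c * D) + E"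
      using sq wz e1 e2 e3 e4 e5 unfolding E_def by (simp add: algebra_simps)
    then have "(norm (Y (Suc l) - z))\<^sup>2 \<le> (norm (xo - z))\<^sup>2
        - (\<Sum>l=1..Suc j. 2 * \<gamma> * (\<phi> l xo - \<phi> l z) + 2 * c * D) + real (Suc j) * E"
      using IH(3) unfolding l_def by (simp add: algebra_simps)
    then show ?case using inX dist1 unfolding l_def by simp
  qed
  have "(norm (Y (n + 1) - z))\<^sup>2 \<le> (norm (xo - z))\<^sup>2 - (\<Sum>l=1..n. 2 * \<gamma> * (\<phi> l xo - \<phi> l z) + 2 * c * D)
        + real n * E" using ind[of n] by simp
  moreover have "(\<Sum>l=1..n. 2 * \<gamma> * (\<phi> l xo - \<phi> l z) + 2 * c * D)
       = 2 * \<gamma> * (\<Sum>j=1..n. \<phi> j xo - \<phi> j z) + 2 * c * real n * D"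
    by (simp add: sum.distrib sum_distrib_left)
  moreover have "real n * E = 12 * real n ^ 2 * B ^ 2 * \<gamma> ^ 2" unfolding E_def by (simp add: power2_eq_square)
  ultimately show ?thesis by simp
qed



lemma avg_bound:
  fixes Y :: "nat \<Rightarrow> 'a::euclidean_space"
  assumes S: "S \<ge> 1"
  shows "(norm ((1 / real S) *\<^sub>R (\<Sum>i=1..S. Y i) - z))\<^sup>2 \<le> (1 / real S) * (\<Sum>i=1..S. (norm (Y i - z))\<^sup>2)"
proof -
  have Sp: "real S > 0" using S by simp
  have "(\<Sum>i=1..S. Y i - z) = (\<Sum>i=1..S. Y i) - real S *\<^sub>R z" by (simp add: sum_subtractf sum_constant_scaleR)
  then have eq: "(1 / real S) *\<^sub>R (\<Sum>i=1..S. Y i) - z = (1 / real S) *\<^sub>R (\<Sum>i=1..S. Y i - z)"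
    using Sp by (simp add: scaleR_diff_right)
  have "norm ((1 / real S) *\<^sub>R (\<Sum>i=1..S. Y i - z)) = (1 / real S) * norm (\<Sum>i=1..S. Y i - z)"
    using Sp by simp
  also have "\<dots> \<le> (1 / real S) * (\<Sum>i=1..S. norm (Y i - z))"
    using Sp by (intro mult_left_mono norm_sum) auto
  finally have n1: "norm ((1 / real S) *\<^sub>R (\<Sum>i=1..S. Y i) - z) \<le> (1 / real S) * (\<Sum>i=1..S. norm (Y i - z))"
    unfolding eq .
  then have "(norm ((1 / real S) *\<^sub>R (\<Sum>i=1..S. Y i) - z))\<^sup>2 \<le> ((1 / real S) * (\<Sum>i=1..S. norm (Y i - z)))\<^sup>2"
    by (simp add: power_mono)
  also have "\<dots> = (1 / real S)^2 * (\<Sum>i=1..S. norm (Y i - z))\<^sup>2" by (rule power_mult_distrib)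
  also have "\<dots> \<le> (1 / real S)^2 * ((\<Sum>i=1..S. (norm (Y i - z))\<^sup>2) * real S)"
    using sum_squared_le_sum_of_squares[of "\<lambda>i. norm (Y i - z)" "{1..S}"]
    by (intro mult_left_mono) auto
  also have "\<dots> = (1 / real S) * (\<Sum>i=1..S. (norm (Y i - z))\<^sup>2)" using Sp by (simp add: power2_eq_square field_simps)
  finally show ?thesis .
qed



theorem theorem1:
  fixes S :: nat and I :: "nat \<Rightarrow> nat"
    and f :: "nat \<Rightarrow> nat \<Rightarrow> real ^ 'n \<Rightarrow> real"
    and H :: "real ^ 'n \<Rightarrow> real" and \<mu> :: real
    and X :: "(real ^ 'n) set"
    and \<gamma> lam :: "nat \<Rightarrow> real"
    and xH :: "real ^ 'n"
    and x :: "nat \<Rightarrow> real ^ 'n" and Hs :: "nat \<Rightarrow> real ^ 'n"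
    and y g :: "nat \<Rightarrow> nat \<Rightarrow> nat \<Rightarrow> real ^ 'n"
  assumes S_pos: "S \<ge> 1" and I_pos: "\<forall>i\<in>{1..S}. I i \<ge> 1"
    and mu_pos: "\<mu> > 0" and H_sc: "strongly_convex \<mu> H"
    and f_cvx: "\<forall>i\<in>{1..S}. \<forall>j\<in>{1..I i}. convex_on UNIV (f i j)"
    and X_ne: "X \<noteq> {}" and X_cpt: "compact X" and X_cvx: "convex X"
    and xH_sol: "xH \<in> {z \<in> X. \<forall>w\<in>X. (\<Sum>i=1..S. \<Sum>j=1..I i. f i j z) \<le> (\<Sum>i=1..S. \<Sum>j=1..I i. f i j w)}"
    and xH_opt: "\<forall>z \<in> {z \<in> X. \<forall>w\<in>X. (\<Sum>i=1..S. \<Sum>j=1..I i. f i j z) \<le> (\<Sum>i=1..S. \<Sum>j=1..I i. f i j w)}.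
                   H xH \<le> H z"
    and gam_pos: "\<forall>k\<ge>1. \<gamma> k > 0" and lam_pos: "\<forall>k\<ge>1. lam k > 0"
    and gam_noninc: "\<forall>k\<ge>1. \<gamma> (k + 1) \<le> \<gamma> k"
    and lam_noninc: "\<forall>k\<ge>1. lam (k + 1) \<le> lam k"
    and init: "\<gamma> 1 * lam 1 * \<mu> \<le> 2 * real (\<Sum>i=1..S. I i)"
    and div: "\<not> summable (\<lambda>k. \<gamma> (k + 1) * lam (k + 1))"
    and sum1: "summable (\<lambda>k. 1 / (\<gamma> (k + 2) * lam (k + 2)) * (1 - lam (k + 1) / lam (k + 2))\<^sup>2)"
    and sum2: "summable (\<lambda>k. (\<gamma> (k + 1))\<^sup>2)"
    and lim1: "(\<lambda>k. 1 / ((\<gamma> (k + 2))\<^sup>2 * (lam (k + 2))\<^sup>2) * (1 - lam (k + 1) / lam (k + 2))\<^sup>2) \<longlonglongrightarrow> 0"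
    and lim2: "(\<lambda>k. \<gamma> k / lam k) \<longlonglongrightarrow> 0"
    and lim3: "lam \<longlonglongrightarrow> 0"
    and fism: "is_FISM S I f H X \<gamma> lam x Hs y g"
  shows "x \<longlonglongrightarrow> xH"
proof -
  define m where "m = real (\<Sum>i=1..S. I i)"
  define F where "F = (\<lambda>z. \<Sum>i=1..S. \<Sum>j=1..I i. f i j z)"
  have "(\<Sum>i=1..S. I i) \<ge> I 1" using S_pos by (intro member_le_sum) auto
  moreover have "I 1 \<ge> 1" using I_pos S_pos by auto
  ultimately have m1: "m \<ge> 1" unfolding m_def by linarith
  have Sp: "real S \<ge> 1" using S_pos by simp
  have fism': "\<forall>k\<ge>1. Hs k \<in> subdiff H (x k) \<and>
        (\<forall>i\<in>{1..S}. y k i 1 = x k \<and>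
           (\<forall>j\<in>{1..I i}. g k i j \<in> subdiff (f i j) (y k i j) \<and>
              y k i (j + 1) = closest_point X
                 (y k i j - \<gamma> k *\<^sub>R g k i j - (\<gamma> k * lam k / m) *\<^sub>R Hs k))) \<and>
        x (k + 1) = (1 / real S) *\<^sub>R (\<Sum>i=1..S. y k i (I i + 1))"
    using fism unfolding is_FISM_def Let_def m_def .
  have FI: "Hs k \<in> subdiff H (x k) \<and>
        (\<forall>i\<in>{1..S}. y k i 1 = x k \<and>
           (\<forall>j\<in>{1..I i}. g k i j \<in> subdiff (f i j) (y k i j) \<and>
              y k i (j + 1) = closest_point X
                 (y k i j - \<gamma> k *\<^sub>R g k i j - (\<gamma> k * lam k / m) *\<^sub>R Hs k))) \<and>
        x (k + 1) = (1 / real S) *\<^sub>R (\<Sum>i=1..S. y k i (I i + 1))" if "k \<ge> 1" for k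
    using fism' that by blast
  have Xcl: "closed X" using X_cpt compact_imp_closed by blast
  have xH: "xH \<in> X" and Fmin: "\<forall>w\<in>X. F xH \<le> F w" using xH_sol unfolding F_def by auto
  have Hopt: "H xH \<le> H z" if "z \<in> X" "F z \<le> F xH" for z
  proof -
    have "\<forall>w\<in>X. F z \<le> F w" using that(2) Fmin order_trans by blast
    then show ?thesis using xH_opt that unfolding F_def by blast
  qed
  have yend: "y k i (I i + 1) \<in> X" if "k \<ge> 1" "i \<in> {1..S}" for k i
  proof -
    have "I i \<in> {1..I i}" using I_pos that by auto
    then show ?thesis using FI[OF that(1)] that(2) closest_point_in_set[OF Xcl X_ne] by auto
  qed
  have xX: "x k \<in> X" if k2: "k \<ge> 2" for k
  proof -
    obtain k' where k': "k = k' + 1" "k' \<ge> 1" using k2 by (intro that[of "k - 1"]) auto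
    have "x k = (\<Sum>i=1..S. (1 / real S) *\<^sub>R y k' i (I i + 1))"
      using FI[OF k'(2)] k'(1) by (simp add: scaleR_sum_right)
    also have "\<dots> \<in> X"
      by (rule convex_sum[OF _ X_cvx]) (use S_pos yend k'(2) in auto)
    finally show ?thesis .
  qed
  define bnd where "bnd = (\<lambda>(\<phi>::real^'n \<Rightarrow> real) M. \<forall>u. (\<exists>x\<in>X. norm (u - x) \<le> 1) \<longrightarrow> \<bar>\<phi> u\<bar> \<le> M)"
  have Hcvx: "convex_on UNIV H" by (rule sc_convex[OF H_sc]) (use mu_pos in simp)
  obtain MH where MH: "MH \<ge> 0" "bnd H MH" using cvx_bound[OF Hcvx X_cpt] unfolding bnd_def by blast
  define Sg where "Sg = Sigma {1..S} (\<lambda>i. {1..I i})"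
  have finSg: "finite Sg" unfolding Sg_def by auto
  have "\<forall>p\<in>Sg. \<exists>M. M \<ge> 0 \<and> bnd (f (fst p) (snd p)) M"
  proof
    fix p assume "p \<in> Sg"
    then have "convex_on UNIV (f (fst p) (snd p))" using f_cvx unfolding Sg_def by auto
    then show "\<exists>M. M \<ge> 0 \<and> bnd (f (fst p) (snd p)) M" using cvx_bound[OF _ X_cpt] unfolding bnd_def by blast
  qed
  then obtain Mf where Mf: "\<forall>p\<in>Sg. Mf p \<ge> 0 \<and> bnd (f (fst p) (snd p)) (Mf p)" by (metis bchoice)
  define Mt where "Mt = MH + (\<Sum>p\<in>Sg. Mf p)"
  have bnd_mono: "bnd \<phi> M'" if "bnd \<phi> M" "M \<le> M'" for \<phi> M M'
    using that unfolding bnd_def by force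
  have Mfs: "(\<Sum>p\<in>Sg. Mf p) \<ge> 0" using Mf by (intro sum_nonneg) auto
  have bf: "bnd (f i j) Mt" if "i \<in> {1..S}" "j \<in> {1..I i}" for i j
  proof -
    have ij: "(i, j) \<in> Sg" using that unfolding Sg_def by auto
    have "Mf (i, j) \<le> (\<Sum>p\<in>Sg. Mf p)" using Mf ij finSg by (intro member_le_sum) auto
    then have "Mf (i, j) \<le> Mt" using MH unfolding Mt_def by linarith
    then show ?thesis using Mf ij bnd_mono by fastforce
  qed
  have bH: "bnd H Mt" using MH Mfs bnd_mono unfolding Mt_def by fastforce
  define B where "B = 2 * Mt"
  have B0: "B \<ge> 0" using MH Mfs unfolding B_def Mt_def by simp
  have lipf: "f i j v - f i j u \<le> B * norm (v - u)"
    if "i \<in> {1..S}" "j \<in> {1..I i}" "u \<in> X" "v \<in> X" for i j u v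
    using cvx_lip[of "f i j" X Mt u v] f_cvx bf[OF that(1,2)] that unfolding bnd_def B_def by blast
  have sgf: "norm g' \<le> B"
    if "i \<in> {1..S}" "j \<in> {1..I i}" "u \<in> X" "g' \<in> subdiff (f i j) u" for i j u g'
    using cvx_subgrad_bound[of X "f i j" Mt u g'] bf[OF that(1,2)] that unfolding bnd_def B_def by blast
  have sgH: "norm h \<le> B" if "u \<in> X" "h \<in> subdiff H u" for u h
    using cvx_subgrad_bound[of X H Mt u h] bH that unfolding bnd_def B_def by blast
  define a where "a = (\<lambda>k. (norm (x k - xH))\<^sup>2)"
  define DD where "DD = (\<lambda>z. H z - H xH + \<mu> / 4 * (norm (z - xH))\<^sup>2)"
  define C where "C = 12 * B\<^sup>2 * m\<^sup>2"
  have C0: "C \<ge> 0" unfolding C_def by simp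
  have gam_lim: "\<gamma> \<longlonglongrightarrow> 0"
  proof -
    have "(\<lambda>k. \<gamma> k / lam k * lam k) \<longlonglongrightarrow> 0 * 0" by (rule tendsto_mult[OF lim2 lim3])
    moreover have "\<forall>\<^sub>F k in sequentially. \<gamma> k / lam k * lam k = \<gamma> k"
      using lam_pos unfolding eventually_sequentially by (intro exI[of _ 1]) auto
    ultimately show ?thesis by (simp add: tendsto_cong)
  qed
  obtain N1 where N1: "\<forall>k\<ge>N1. lam k < 1" using order_tendstoD(2)[OF lim3, of 1] unfolding eventually_sequentially by auto
  obtain N2 where N2: "\<forall>k\<ge>N2. \<gamma> k < 1" using order_tendstoD(2)[OF gam_lim, of 1] unfolding eventually_sequentially by auto
  define K0 where "K0 = max 2 (max N1 N2)"
  have K0: "K0 \<ge> 2" "\<And>k. k \<ge> K0 \<Longrightarrow> lam k \<le> 1 \<and> \<gamma> k \<le> 1 \<and> 0 < lam k \<and> 0 < \<gamma> k \<and> x k \<in> X"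
    unfolding K0_def using N1 N2 lam_pos gam_pos xX by force+
  have rec: "a (k + 1) \<le> a k - (2 * \<gamma> k / real S) * (F (x k) - F xH + lam k * DD (x k)) + C * (\<gamma> k)\<^sup>2"
    if k: "k \<ge> K0" for k
  proof -
    have k1: "k \<ge> 1" using k K0 by simp
    have Kk: "lam k \<le> 1" "\<gamma> k \<le> 1" "0 < lam k" "0 < \<gamma> k" "x k \<in> X" using K0(2)[OF k] by auto
    define c where "c = \<gamma> k * lam k / m"
    have c0: "0 \<le> c" unfolding c_def using Kk m1 by simp
    have cg: "c \<le> \<gamma> k"
    proof -
      have "lam k / m \<le> 1" using Kk m1 by simp
      then have "\<gamma> k * (lam k / m) \<le> \<gamma> k * 1" using Kk by (intro mult_left_mono) auto
      then show ?thesis unfolding c_def by simp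
    qed
    have hsub: "Hs k \<in> subdiff H (x k)" using FI[OF k1] by blast
    have hD: "DD (x k) \<le> Hs k \<bullet> (x k - xH)" using sc_subgrad[OF H_sc hsub, of xH] unfolding DD_def by simp
    have hb: "norm (Hs k) \<le> B" using sgH[OF Kk(5) hsub] .
    define T where "T = (\<lambda>i. a k - 2 * \<gamma> k * (\<Sum>j=1..I i. f i j (x k) - f i j xH)
           - 2 * c * real (I i) * DD (x k) + 12 * real (I i) ^ 2 * B ^ 2 * (\<gamma> k) ^ 2)"
    have cb: "(norm (y k i (I i + 1) - xH))\<^sup>2 \<le> T i" if i: "i \<in> {1..S}" for i
      unfolding T_def a_def
    proof (rule client_bound[where X=X and z=xH and xo="x k" and Y="y k i" and n="I i" and \<gamma>="\<gamma> k"
          and g="g k i" and c=c and h="Hs k" and \<phi>="f i" and B=B and D="DD (x k)"])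
      show "closed X" "convex X" "X \<noteq> {}" "xH \<in> X" "x k \<in> X" by (fact Xcl X_cvx X_ne xH Kk(5))+
      show "y k i 1 = x k" using FI[OF k1] i by blast
      show "I i \<ge> 1" using I_pos i by blast
      show "\<forall>j\<in>{1..I i}. y k i (j + 1) = closest_point X (y k i j - \<gamma> k *\<^sub>R g k i j - c *\<^sub>R Hs k)"
        using FI[OF k1] i unfolding c_def by blast
      show "\<forall>j\<in>{1..I i}. g k i j \<in> subdiff (f i j) (y k i j)" using FI[OF k1] i by blast
      show "\<forall>j\<in>{1..I i}. \<forall>u\<in>X. \<forall>g'\<in>subdiff (f i j) u. norm g' \<le> B" using sgf i by blast
      show "\<forall>j\<in>{1..I i}. \<forall>u\<in>X. \<forall>v\<in>X. f i j v - f i j u \<le> B * norm (v - u)" using lipf i by blast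
      show "norm (Hs k) \<le> B" by (fact hb)
      show "DD (x k) \<le> Hs k \<bullet> (x k - xH)" by (fact hD)
      show "0 \<le> \<gamma> k" using Kk by simp
      show "0 \<le> c" "c \<le> \<gamma> k" "0 \<le> B" by (fact c0 cg B0)+
    qed
    have "a (k + 1) \<le> (1 / real S) * (\<Sum>i=1..S. (norm (y k i (I i + 1) - xH))\<^sup>2)"
      unfolding a_def using FI[OF k1] avg_bound[OF S_pos, of "\<lambda>i. y k i (I i + 1)" xH] by simp
    also have "\<dots> \<le> (1 / real S) * (\<Sum>i=1..S. T i)"
      using cb Sp by (intro mult_left_mono sum_mono) auto
    finally have A1: "a (k + 1) \<le> (1 / real S) * (\<Sum>i=1..S. T i)" .
    have sF: "(\<Sum>i=1..S. (\<Sum>j=1..I i. f i j (x k) - f i j xH)) = F (x k) - F xH"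
      unfolding F_def by (simp add: sum_subtractf)
    have sI: "(\<Sum>i=1..S. real (I i)) = m" unfolding m_def by simp
    have sI2: "(\<Sum>i=1..S. real (I i) ^ 2) \<le> m ^ 2"
    proof -
      have "(\<Sum>i=1..S. real (I i) ^ 2) \<le> (\<Sum>i=1..S. real (I i) * m)"
      proof (rule sum_mono)
        fix i assume "i \<in> {1..S}"
        then have "I i \<le> (\<Sum>i=1..S. I i)" by (intro member_le_sum) auto
        then have "real (I i) \<le> m" unfolding m_def by (simp only: of_nat_le_iff)
        then show "real (I i) ^ 2 \<le> real (I i) * m" by (simp add: power2_eq_square mult_left_mono)
      qed
      also have "\<dots> = m ^ 2" using sI by (simp add: sum_distrib_right[symmetric] power2_eq_square)
      finally show ?thesis .
    qed
    have sT: "(\<Sum>i=1..S. T i) = real S * a k - 2 * \<gamma> k * (F (x k) - F xH) - 2 * c * m * DD (x k)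
        + 12 * B ^ 2 * (\<gamma> k) ^ 2 * (\<Sum>i=1..S. real (I i) ^ 2)"
      unfolding T_def sF[symmetric] sI[symmetric]
      by (simp add: sum.distrib sum_subtractf sum_distrib_left sum_distrib_right algebra_simps)
    have cm: "c * m = \<gamma> k * lam k" unfolding c_def using m1 by simp
    have "12 * B ^ 2 * (\<gamma> k) ^ 2 * (\<Sum>i=1..S. real (I i) ^ 2) \<le> 12 * B ^ 2 * (\<gamma> k) ^ 2 * m ^ 2"
      using sI2 by (intro mult_left_mono) auto
    also have "\<dots> = C * (\<gamma> k)\<^sup>2" unfolding C_def by simp
    finally have E1: "12 * B ^ 2 * (\<gamma> k) ^ 2 * (\<Sum>i=1..S. real (I i) ^ 2) \<le> C * (\<gamma> k)\<^sup>2" .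
    have E2: "(1 / real S) * (C * (\<gamma> k)\<^sup>2) \<le> C * (\<gamma> k)\<^sup>2"
    proof -
      have "1 / real S \<le> 1" using Sp by simp
      then have "(1 / real S) * (C * (\<gamma> k)\<^sup>2) \<le> 1 * (C * (\<gamma> k)\<^sup>2)" using C0 by (intro mult_right_mono) auto
      then show ?thesis by simp
    qed
    have "(1 / real S) * (\<Sum>i=1..S. T i) \<le> (1 / real S) * (real S * a k - 2 * \<gamma> k * (F (x k) - F xH)
        - 2 * (\<gamma> k * lam k) * DD (x k) + C * (\<gamma> k)\<^sup>2)"
    proof -
      have cmD: "2 * c * m * DD (x k) = 2 * (\<gamma> k * lam k) * DD (x k)" using cm by simp
      show ?thesis unfolding sT cmD using E1 Sp by (intro mult_left_mono) auto
    qed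
    also have "\<dots> = a k - (2 * \<gamma> k / real S) * (F (x k) - F xH + lam k * DD (x k))
        + (1 / real S) * (C * (\<gamma> k)\<^sup>2)"
      using Sp by (simp add: field_simps)
    also have "\<dots> \<le> a k - (2 * \<gamma> k / real S) * (F (x k) - F xH + lam k * DD (x k)) + C * (\<gamma> k)\<^sup>2"
      using E2 by simp
    finally show ?thesis using A1 by simp
  qed
  have cF: "continuous_on UNIV F" unfolding F_def
    using f_cvx by (intro continuous_on_sum convex_on_continuous) auto
  have cH: "continuous_on UNIV H" using Hcvx by (intro convex_on_continuous) auto
  have cD: "continuous_on UNIV DD" unfolding DD_def by (intro continuous_intros cH)
  have Dp: "\<forall>z\<in>X. F z \<le> F xH \<longrightarrow> \<mu> / 4 * (norm (z - xH))\<^sup>2 \<le> DD z"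
    unfolding DD_def using Hopt by fastforce
  have "compact (DD ` X)" by (rule compact_continuous_image[OF continuous_on_subset[OF cD subset_UNIV] X_cpt])
  then obtain MD where MD: "\<forall>v\<in>DD ` X. norm v \<le> MD" using compact_imp_bounded[of "DD ` X"] unfolding bounded_iff by blast
  have MD0: "MD \<ge> 0" using MD xH by force
  have P: "\<forall>\<epsilon>>0. \<exists>\<delta>>0. \<exists>K. \<forall>k\<ge>K. \<epsilon> \<le> a k \<longrightarrow> a (k + 1) \<le> a k - \<delta> * (\<gamma> k * lam k)"
  proof (intro allI impI)
    fix \<epsilon> :: real assume eps: "\<epsilon> > 0"
    obtain \<delta>0 l0 where d0: "\<delta>0 > 0" "l0 > 0" and kl: "\<forall>z\<in>X. \<epsilon> \<le> (norm (z - xH))\<^sup>2 \<longrightarrow>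
           (\<forall>l. 0 < l \<longrightarrow> l \<le> l0 \<longrightarrow> \<delta>0 * l \<le> F z - F xH + l * DD z)"
      using key_lemma[OF X_cpt cF cD xH Fmin Dp mu_pos eps] by blast
    define q where "q = \<delta>0 / (real S * (C + 1))"
    have q0: "q > 0" unfolding q_def using d0 Sp C0 by simp
    obtain N3 where N3: "\<forall>k\<ge>N3. lam k < l0" using order_tendstoD(2)[OF lim3 d0(2)] unfolding eventually_sequentially by auto
    obtain N4 where N4: "\<forall>k\<ge>N4. \<gamma> k / lam k < q" using order_tendstoD(2)[OF lim2 q0] unfolding eventually_sequentially by auto
    show "\<exists>\<delta>>0. \<exists>K. \<forall>k\<ge>K. \<epsilon> \<le> a k \<longrightarrow> a (k + 1) \<le> a k - \<delta> * (\<gamma> k * lam k)"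
    proof (intro exI[of _ "\<delta>0 / real S"] conjI exI[of _ "max K0 (max N3 N4)"] allI impI)
      show "\<delta>0 / real S > 0" using d0 Sp by simp
      fix k assume k: "max K0 (max N3 N4) \<le> k" and ak: "\<epsilon> \<le> a k"
      have kK: "k \<ge> K0" using k by simp
      have Kk: "lam k \<le> 1" "\<gamma> k \<le> 1" "0 < lam k" "0 < \<gamma> k" "x k \<in> X" using K0(2)[OF kK] by auto
      have lk: "lam k \<le> l0" using N3 k by force
      have gq: "\<gamma> k \<le> q * lam k" using N4 k Kk by (force simp: divide_less_eq)
      have main: "\<delta>0 * lam k \<le> F (x k) - F xH + lam k * DD (x k)"
        using kl Kk(5) ak lk Kk(3) unfolding a_def by blast
      have t1: "(2 * \<gamma> k / real S) * (\<delta>0 * lam k) \<le> (2 * \<gamma> k / real S) * (F (x k) - F xH + lam k * DD (x k))"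
        using main Kk Sp by (intro mult_left_mono) auto
      have t2: "C * (\<gamma> k)\<^sup>2 \<le> (\<delta>0 / real S) * (\<gamma> k * lam k)"
      proof -
        have "C * (\<gamma> k)\<^sup>2 \<le> (C + 1) * (\<gamma> k)\<^sup>2" by (intro mult_right_mono) auto
        also have "\<dots> = ((C + 1) * \<gamma> k) * \<gamma> k" by (simp add: power2_eq_square)
        also have "\<dots> \<le> ((C + 1) * (q * lam k)) * \<gamma> k" using gq C0 Kk by (intro mult_right_mono mult_left_mono) auto
        also have "\<dots> = ((C + 1) * q) * (\<gamma> k * lam k)" by (simp add: algebra_simps)
        also have "(C + 1) * q = \<delta>0 / real S"
        proof -
          have "C + 1 \<noteq> 0" using C0 by simp
          then show ?thesis unfolding q_def by simp
        qed
        finally show ?thesis .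
      qed
      have "a (k + 1) \<le> a k - (2 * \<gamma> k / real S) * (\<delta>0 * lam k) + (\<delta>0 / real S) * (\<gamma> k * lam k)"
        using rec[OF kK] t1 t2 by linarith
      also have "\<dots> = a k - \<delta>0 / real S * (\<gamma> k * lam k)" by (simp add: field_simps)
      finally show "a (k + 1) \<le> a k - \<delta>0 / real S * (\<gamma> k * lam k)" .
    qed
  qed
  have Q: "\<forall>\<epsilon>>0. \<exists>K. \<forall>k\<ge>K. a (k + 1) \<le> a k + \<epsilon>"
  proof (intro allI impI)
    fix \<epsilon> :: real assume eps: "\<epsilon> > 0"
    define q where "q = \<epsilon> / (2 * MD + C + 1)"
    have q0: "q > 0" unfolding q_def using eps MD0 C0 by simp
    obtain N5 where N5: "\<forall>k\<ge>N5. \<gamma> k < q" using order_tendstoD(2)[OF gam_lim q0] unfolding eventually_sequentially by auto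
    show "\<exists>K. \<forall>k\<ge>K. a (k + 1) \<le> a k + \<epsilon>"
    proof (intro exI[of _ "max K0 N5"] allI impI)
      fix k assume k: "max K0 N5 \<le> k"
      have kK: "k \<ge> K0" using k by simp
      have Kk: "lam k \<le> 1" "\<gamma> k \<le> 1" "0 < lam k" "0 < \<gamma> k" "x k \<in> X" using K0(2)[OF kK] by auto
      have gq: "\<gamma> k \<le> q" using N5 k by force
      have F0: "F (x k) - F xH \<ge> 0" using Fmin Kk(5) by force
      have "DD (x k) \<ge> - MD" using MD Kk(5) by force
      then have "lam k * DD (x k) \<ge> lam k * (- MD)" using Kk by (intro mult_left_mono) auto
      moreover have "lam k * MD \<le> 1 * MD" using Kk MD0 by (intro mult_right_mono) auto
      ultimately have lD: "F (x k) - F xH + lam k * DD (x k) \<ge> - MD" using F0 by simp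
      have t1: "- ((2 * \<gamma> k / real S) * (F (x k) - F xH + lam k * DD (x k))) \<le> 2 * \<gamma> k * MD"
      proof -
        have "(2 * \<gamma> k / real S) * (- MD) \<le> (2 * \<gamma> k / real S) * (F (x k) - F xH + lam k * DD (x k))"
          using lD Kk Sp by (intro mult_left_mono) auto
        moreover have "(2 * \<gamma> k / real S) * MD \<le> 2 * \<gamma> k * MD"
        proof -
          have "2 * \<gamma> k / real S \<le> 2 * \<gamma> k / 1" by (rule divide_left_mono) (use Kk Sp in auto)
          then show ?thesis using MD0 by (intro mult_right_mono) auto
        qed
        ultimately show ?thesis by simp
      qed
      have t2: "C * (\<gamma> k)\<^sup>2 \<le> C * \<gamma> k"
        using Kk C0 by (simp add: power2_eq_square mult_left_mono mult_le_cancel_left1)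
      have "a (k + 1) \<le> a k + \<gamma> k * (2 * MD + C)" using rec[OF kK] t1 t2 by (simp add: algebra_simps)
      also have "\<gamma> k * (2 * MD + C) \<le> q * (2 * MD + C + 1)"
        using gq Kk MD0 C0 by (intro mult_mono) auto
      also have "q * (2 * MD + C + 1) = \<epsilon>" unfolding q_def using MD0 C0 by simp
      finally show "a (k + 1) \<le> a k + \<epsilon>" by simp
    qed
  qed
  have a0: "a \<longlonglongrightarrow> 0"
  proof (rule seq_conv[of a "\<lambda>k. \<gamma> k * lam k"])
    show "\<forall>k. 0 \<le> a k" unfolding a_def by simp
    show "\<forall>k\<ge>1. 0 \<le> \<gamma> k * lam k" using gam_pos lam_pos by (simp add: less_imp_le)
    show "\<not> summable (\<lambda>k. \<gamma> (k + 1) * lam (k + 1))" by (fact div)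
    show "\<forall>\<epsilon>>0. \<exists>\<delta>>0. \<exists>K. \<forall>k\<ge>K. \<epsilon> \<le> a k \<longrightarrow> a (k + 1) \<le> a k - \<delta> * (\<gamma> k * lam k)" by (fact P)
    show "\<forall>\<epsilon>>0. \<exists>K. \<forall>k\<ge>K. a (k + 1) \<le> a k + \<epsilon>" by (fact Q)
  qed
  have "(\<lambda>k. sqrt (a k)) \<longlonglongrightarrow> sqrt 0" by (rule tendsto_real_sqrt[OF a0])
  then have "(\<lambda>k. norm (x k - xH)) \<longlonglongrightarrow> 0" unfolding a_def by simp
  then have "(\<lambda>k. x k - xH) \<longlonglongrightarrow> 0" by (simp add: tendsto_norm_zero_iff)
  then show ?thesis by (simp add: LIM_zero_iff)
qed
end
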